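(* Assume the standing setup below and let $\rho\ge0$. If $\mathcal{G}$ is a quasi-concave hill, then $\mathcal{NE}_\rho$ is a singleton, and its unique element is the unique optimizer of the problem $\max_{\mathbf{x}} U(\mathbf{x})$ subject to $\mathbf{x}\in\mathcal{S}_\rho$, where $U(\mathbf{x})=\sum_{i\in\mathcal{V}}[p_i(\mathbf{x}_i)-p_i(0)]$.
   Context: Standing setup: $\mathcal{G}=(\mathcal{V},\mathcal{E})$ is a finite, connected, undirected graph; $\mathcal{N}^i$ denotes the set of neighbours of node $i$. For $\rho\ge0$, $\mathcal{S}_\rho=\{\mathbf{x}\in\mathbb{R}^{|\mathcal{V}|}:\mathbf{x}\ge 0,\ \sum_{i\in\mathcal{V}}\mathbf{x}_i=\rho\}$, and $\mathrm{supp}(\mathbf{x})=\{i:\mathbf{x}_i\neq 0\}$. For each node $i$, $p_i:[0,\infty)\to\mathbb{R}$ is twice continuously differentiable and strictly concave, and $u_i:=p_i'$ (right derivative at $0$), so each $u_i$ is strictly decreasing. The maximum payoff density parameter (MPDP) of node $i$ is $\mathbf{a}_i:=u_i(0)$. The set of Nash equilibria is $\mathcal{NE}_\rho=\{\mathbf{x}\in\mathcal{S}_\rho: u_i(\mathbf{x}_i)\ge u_j(\mathbf{x}_j)\ \forall j\in\mathcal{N}^i,\ \forall i\in\mathrm{supp}(\mathbf{x})\}$. A path $\pi(1),\dots,\pi(n)$ in $\mathcal{G}$ (distinct nodes, consecutive ones adjacent) is a path with quasi-concave MPDP's if for all $1\le k\le m\le l\le n$, $\mathbf{a}_{\pi(m)}\ge\min\{\mathbf{a}_{\pi(k)},\mathbf{a}_{\pi(l)}\}$.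 $\mathcal{G}$ is a quasi-concave hill (QCH) if between every two distinct nodes there exists a path with quasi-concave MPDP's. *)

theory Defs
  imports "HOL-Analysis.Analysis"
begin

definition graph_connected :: "'a set \<Rightarrow> ('a \<Rightarrow> 'a \<Rightarrow> bool) \<Rightarrow> bool" where
  "graph_connected V E \<longleftrightarrow>
     (\<forall>i\<in>V. \<forall>j\<in>V. (\<lambda>a b. a \<in> V \<and> b \<in> V \<and> E a b)\<^sup>*\<^sup>* i j)"

definition neighbours :: "'a set \<Rightarrow> ('a \<Rightarrow> 'a \<Rightarrow> bool) \<Rightarrow> 'a \<Rightarrow> 'a set" where
  "neighbours V E i = {j \<in> V. E i j}"

definition strictly_concave_on :: "real set \<Rightarrow> (real \<Rightarrow> real) \<Rightarrow> bool" where
  "strictly_concave_on S f \<longleftrightarrow>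
     (\<forall>x\<in>S. \<forall>y\<in>S. \<forall>t::real. x \<noteq> y \<and> 0 < t \<and> t < 1 \<longrightarrow>
        f ((1 - t) * x + t * y) > (1 - t) * f x + t * f y)"

text \<open>Strategy profiles are functions 'a => real, zero outside V (elements of R^V).\<close>
definition strategy_simplex :: "'a set \<Rightarrow> real \<Rightarrow> ('a \<Rightarrow> real) set" where
  "strategy_simplex V \<rho> = {x. (\<forall>i\<in>V. 0 \<le> x i) \<and> (\<forall>i. i \<notin> V \<longrightarrow> x i = 0) \<and> (\<Sum>i\<in>V. x i) = \<rho>}"

definition support_on :: "'a set \<Rightarrow> ('a \<Rightarrow> real) \<Rightarrow> 'a set" where
  "support_on V x = {i \<in> V. x i \<noteq> 0}"

definition nash_eq :: "'a set \<Rightarrow> ('a \<Rightarrow> 'a \<Rightarrow> bool) \<Rightarrow> ('a \<Rightarrow> real \<Rightarrow> real) \<Rightarrow> real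
                        \<Rightarrow> ('a \<Rightarrow> real) set" where
  "nash_eq V E u \<rho> = {x \<in> strategy_simplex V \<rho>.
      \<forall>i\<in>support_on V x. \<forall>j\<in>neighbours V E i. u i (x i) \<ge> u j (x j)}"

definition is_path :: "'a set \<Rightarrow> ('a \<Rightarrow> 'a \<Rightarrow> bool) \<Rightarrow> 'a list \<Rightarrow> bool" where
  "is_path V E ps \<longleftrightarrow> ps \<noteq> [] \<and> distinct ps \<and> set ps \<subseteq> V \<and>
     (\<forall>k. Suc k < length ps \<longrightarrow> E (ps ! k) (ps ! Suc k))"

definition quasi_concave_path :: "('a \<Rightarrow> real) \<Rightarrow> 'a list \<Rightarrow> bool" where
  "quasi_concave_path a ps \<longleftrightarrow>
     (\<forall>k m l. k \<le> m \<and> m \<le> l \<and> l < length ps \<longrightarrow>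
        a (ps ! m) \<ge> min (a (ps ! k)) (a (ps ! l)))"

definition quasi_concave_hill :: "'a set \<Rightarrow> ('a \<Rightarrow> 'a \<Rightarrow> bool) \<Rightarrow> ('a \<Rightarrow> real) \<Rightarrow> bool" where
  "quasi_concave_hill V E a \<longleftrightarrow>
     (\<forall>i\<in>V. \<forall>j\<in>V. i \<noteq> j \<longrightarrow>
        (\<exists>ps. is_path V E ps \<and> hd ps = i \<and> last ps = j \<and> quasi_concave_path a ps))"

end

theory Submission imports Defs begin

lemma tangent_le:
  fixes f f' :: "real \<Rightarrow> real"
  assumes conc: "strictly_concave_on {0..} f"
    and der: "\<And>x. 0 \<le> x \<Longrightarrow> (f has_real_derivative f' x) (at x within {0..})"
    and c: "0 \<le> c" and y: "0 \<le> y"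
  shows "f y \<le> f c + f' c * (y - c)"
proof (rule ccontr)
  assume "\<not> ?thesis"
  hence ne: "y \<noteq> c" and gt: "f y - f c > f' c * (y - c)" by auto
  define s where "s = (f y - f c) / (y - c)"
  have sy: "s * (y - c) = f y - f c" using ne by (simp add: s_def)
  define \<phi> where "\<phi> z = f z - f c - s * (z - c)" for z
  have pos: "\<phi> ((1-t)*c + t*y) > 0" if "0<t" "t<1" for t
  proof -
    have "f ((1-t)*c + t*y) > (1-t) * f c + t * f y"
      using conc c y ne that unfolding strictly_concave_on_def by auto
    moreover have "(1-t)*c + t*y - c = t*(y-c)" by (simp add: algebra_simps)
    moreover have "s * (t*(y-c)) = t * (f y - f c)" using sy by (metis mult.left_commute)
    ultimately show ?thesis unfolding \<phi>_def by (simp add: algebra_simps)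
  qed
  have d\<phi>: "(\<phi> has_real_derivative (f' c - s)) (at c within {0..})"
    unfolding \<phi>_def using der[OF c] by (auto intro!: derivative_eq_intros)
  have \<phi>c: "\<phi> c = 0" by (simp add: \<phi>_def)
  show False
  proof (cases "c < y")
    case True
    have "f' c * (y - c) < s * (y - c)" using gt sy by simp
    then have "f' c < s" using True by (simp add: mult_less_cancel_right)
    then obtain d where d: "d>0" "\<forall>h>0. c + h \<in> {0..} \<longrightarrow> h < d \<longrightarrow> \<phi> c > \<phi> (c + h)"
      using has_real_derivative_neg_dec_right[OF d\<phi>] by auto
    define h where "h = min (d/2) ((y-c)/2)"
    have h: "0 < h" "h < d" "h < y - c" using d True by (auto simp: h_def min_def)
    define t where "t = h/(y-c)"
    have t: "0<t" "t<1" using h True by (auto simp: t_def)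
    have th: "t*(y-c) = h" using True by (simp add: t_def)
    have "(1-t)*c + t*y = c + t*(y-c)" by (simp add: algebra_simps)
    then have "c + h = (1-t)*c + t*y" using th by simp
    then have "\<phi> (c+h) > 0" using pos[OF t] by simp
    moreover have "\<phi> c > \<phi> (c+h)" using d h c by auto
    ultimately show False using \<phi>c by linarith
  next
    case False
    with ne have yc: "y < c" by auto
    have "f' c * (y - c) < s * (y - c)" using gt sy by simp
    then have "s < f' c" using yc by (simp add: mult_less_cancel_right)
    then obtain d where d: "d>0" "\<forall>h>0. c - h \<in> {0..} \<longrightarrow> h < d \<longrightarrow> \<phi> (c - h) < \<phi> c"
      using has_real_derivative_pos_inc_left[OF d\<phi>] by auto
    define h where "h = min (d/2) ((c-y)/2)"
    have h: "0 < h" "h < d" "h < c - y" using d yc by (auto simp: h_def min_def)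
    define t where "t = h/(c-y)"
    have t: "0<t" "t<1" using h yc by (auto simp: t_def)
    have th: "t*(c-y) = h" using yc by (simp add: t_def)
    have "(1-t)*c + t*y = c - t*(c-y)" by (simp add: algebra_simps)
    then have "c - h = (1-t)*c + t*y" using th by simp
    then have "\<phi> (c-h) > 0" using pos[OF t] by simp
    moreover have "\<phi> (c-h) < \<phi> c" using d h y by auto
    ultimately show False using \<phi>c by linarith
  qed
qed

lemma tangent_lt:
  fixes f f' :: "real \<Rightarrow> real"
  assumes conc: "strictly_concave_on {0..} f"
    and der: "\<And>x. 0 \<le> x \<Longrightarrow> (f has_real_derivative f' x) (at x within {0..})"
    and c: "0 \<le> c" and y: "0 \<le> y" and ne: "y \<noteq> c"
  shows "f y < f c + f' c * (y - c)"
proof -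
  have "f ((1 - 1/2) * c + (1/2) * y) > (1 - 1/2) * f c + (1/2) * f y"
    using conc[unfolded strictly_concave_on_def, rule_format, of c y "1/2"] c y ne by simp
  moreover have "f ((1 - 1/2) * c + (1/2) * y) \<le> f c + f' c * ((1 - 1/2) * c + (1/2) * y - c)"
    by (rule tangent_le[OF conc der c]) (use c y in auto)
  ultimately show ?thesis by (simp add: algebra_simps)
qed

lemma deriv_dec:
  fixes f f' :: "real \<Rightarrow> real"
  assumes conc: "strictly_concave_on {0..} f"
    and der: "\<And>x. 0 \<le> x \<Longrightarrow> (f has_real_derivative f' x) (at x within {0..})"
    and s: "0 \<le> s" and st: "s < t"
  shows "f' t < f' s"
proof -
  have 1: "f t < f s + f' s * (t - s)" by (rule tangent_lt[OF conc der]) (use s st in auto)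
  have 2: "f s < f t + f' t * (s - t)" by (rule tangent_lt[OF conc der]) (use s st in auto)
  have "0 < (f' s - f' t) * (t - s)" using 1 2 by (simp add: algebra_simps)
  then show ?thesis using st by (simp add: zero_less_mult_iff)
qed


lemma simplex_compact:
  fixes V :: "'a set" assumes finV: "finite V" and rho: "0 \<le> \<rho>"
  shows "compact (strategy_simplex V \<rho>)"
proof -
  define K where "K i = (if i \<in> V then {0..\<rho>} else {0::real})" for i
  have eq: "strategy_simplex V \<rho> = PiE UNIV K \<inter> {x. (\<Sum>i\<in>V. x i) = \<rho>}"
  proof (intro set_eqI iffI)
    fix x assume x: "x \<in> strategy_simplex V \<rho>"
    have "x i \<le> \<rho>" if "i \<in> V" for i
    proof -
      have "x i \<le> (\<Sum>i\<in>V. x i)"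
        by (rule member_le_sum) (use x that finV in \<open>auto simp: strategy_simplex_def\<close>)
      then show ?thesis using x by (simp add: strategy_simplex_def)
    qed
    then show "x \<in> PiE UNIV K \<inter> {x. (\<Sum>i\<in>V. x i) = \<rho>}"
      using x by (auto simp: strategy_simplex_def K_def PiE_iff)
  next
    fix x assume "x \<in> PiE UNIV K \<inter> {x. (\<Sum>i\<in>V. x i) = \<rho>}"
    then show "x \<in> strategy_simplex V \<rho>"
      by (auto simp: strategy_simplex_def K_def PiE_iff split: if_splits)
  qed
  have "compactin (product_topology (\<lambda>i. euclidean) UNIV) (PiE UNIV K)"
    by (subst compactin_PiE) (auto simp: K_def)
  then have c1: "compact (PiE UNIV K)"
    by (simp add: euclidean_product_topology)
  have c2: "closed {x::'a\<Rightarrow>real. (\<Sum>i\<in>V. x i) = \<rho>}"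
    by (intro closed_Collect_eq continuous_on_sum continuous_intros) auto
  show ?thesis unfolding eq using c1 c2 by blast
qed

theorem mainTheorem3:
  fixes V :: "'a set" and E :: "'a \<Rightarrow> 'a \<Rightarrow> bool"
    and p u u' :: "'a \<Rightarrow> real \<Rightarrow> real" and \<rho> :: real
  assumes finV: "finite V" and neV: "V \<noteq> {}"
    and symE: "\<And>i j. E i j \<Longrightarrow> E j i"
    and irrE: "\<And>i. \<not> E i i"
    and conn: "graph_connected V E"
    and dp: "\<And>i x. i \<in> V \<Longrightarrow> 0 \<le> x \<Longrightarrow> (p i has_real_derivative u i x) (at x within {0..})"
    and du: "\<And>i x. i \<in> V \<Longrightarrow> 0 \<le> x \<Longrightarrow> (u i has_real_derivative u' i x) (at x within {0..})"
    and cu': "\<And>i. i \<in> V \<Longrightarrow> continuous_on {0..} (u' i)"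
    and conc: "\<And>i. i \<in> V \<Longrightarrow> strictly_concave_on {0..} (p i)"
    and rho: "0 \<le> \<rho>"
    and qch: "quasi_concave_hill V E (\<lambda>i. u i 0)"
  shows "\<exists>x. nash_eq V E u \<rho> = {x} \<and> x \<in> strategy_simplex V \<rho> \<and>
           (\<forall>y\<in>strategy_simplex V \<rho>. y \<noteq> x \<longrightarrow>
              (\<Sum>i\<in>V. p i (y i) - p i 0) < (\<Sum>i\<in>V. p i (x i) - p i 0))"
proof -
  define S where "S = strategy_simplex V \<rho>"
  define U where "U y = (\<Sum>i\<in>V. p i (y i) - p i 0)" for y
  have dec: "u i t < u i s" if "i \<in> V" "0 \<le> s" "s < t" for i s t
    by (rule deriv_dec[OF conc[OF that(1)] dp[OF that(1)]]) (use that in auto)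
  have decle: "u i t \<le> u i s" if "i \<in> V" "0 \<le> s" "s \<le> t" for i s t
    using dec[OF that(1,2)] that by (cases "s = t") (auto simp: less_imp_le)
  have tlt: "p i y < p i c + u i c * (y - c)" if "i \<in> V" "0 \<le> c" "0 \<le> y" "y \<noteq> c" for i c y
    by (rule tangent_lt[OF conc[OF that(1)] dp[OF that(1)]]) (use that in auto)
  have tle: "p i y \<le> p i c + u i c * (y - c)" if "i \<in> V" "0 \<le> c" "0 \<le> y" for i c y
    by (rule tangent_le[OF conc[OF that(1)] dp[OF that(1)]]) (use that in auto)
  have Snn: "x i \<ge> 0" if "x \<in> S" for x i
    using that by (cases "i \<in> V") (auto simp: S_def strategy_simplex_def)
  have Sout: "x i = 0" if "x \<in> S" "i \<notin> V" for x i
    using that by (auto simp: S_def strategy_simplex_def)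
  have Ssum: "(\<Sum>i\<in>V. x i) = \<rho>" if "x \<in> S" for x
    using that by (auto simp: S_def strategy_simplex_def)
  define KKT where "KKT x \<longleftrightarrow> x \<in> S \<and> (\<forall>i\<in>V. x i \<noteq> 0 \<longrightarrow> (\<forall>j\<in>V. u j (x j) \<le> u i (x i)))" for x
  have opt: "U y < U x" if kx: "KKT x" and yS: "y \<in> S" and yx: "y \<noteq> x" for x y
  proof -
    have xS: "x \<in> S" using kx by (simp add: KKT_def)
    have "\<exists>k. y k \<noteq> x k" using yx by (simp add: fun_eq_iff)
    then obtain k where k: "y k \<noteq> x k" by blast
    have kV: "k \<in> V"
    proof (rule ccontr)
      assume "k \<notin> V"
      then show False using k Sout[OF xS, of k] Sout[OF yS, of k] by simp
    qed
    obtain m where mV: "m \<in> V" and xm: "x m \<noteq> 0"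
    proof (rule ccontr)
      assume "\<not> thesis"
      then have x0: "\<forall>i\<in>V. x i = 0" using that by blast
      then have "\<rho> = 0" using Ssum[OF xS] by simp
      moreover have "\<forall>i\<in>V. 0 \<le> y i" using Snn[OF yS] by blast
      ultimately have "\<forall>i\<in>V. y i = 0" using Ssum[OF yS] finV
        using sum_nonneg_eq_0_iff[OF finV, of y] by metis
      then show False using k kV x0 by simp
    qed
    define lam where "lam = u m (x m)"
    have key: "u i (x i) * (y i - x i) \<le> lam * (y i - x i)" if iV: "i \<in> V" for i
    proof (cases "x i = 0")
      case True
      have "u i (x i) \<le> lam" using kx mV xm iV unfolding KKT_def lam_def by blast
      then have "u i 0 \<le> lam" using True by simp
      then show ?thesis using True Snn[OF yS, of i] by (simp add: mult_right_mono)
    next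
      case False
      have "u i (x i) = lam" using kx mV xm iV False unfolding KKT_def lam_def
        by (meson order_antisym)
      then show ?thesis by simp
    qed
    have "(\<Sum>i\<in>V. u i (x i) * (y i - x i)) \<le> (\<Sum>i\<in>V. lam * (y i - x i))"
      using key by (rule sum_mono)
    also have "\<dots> = lam * ((\<Sum>i\<in>V. y i) - (\<Sum>i\<in>V. x i))"
      by (simp add: sum_distrib_left sum_subtractf right_diff_distrib)
    also have "\<dots> = 0" using Ssum[OF xS] Ssum[OF yS] by simp
    finally have s0: "(\<Sum>i\<in>V. u i (x i) * (y i - x i)) \<le> 0" .
    have "U y < (\<Sum>i\<in>V. p i (x i) + u i (x i) * (y i - x i) - p i 0)"
      unfolding U_def
    proof (rule sum_strict_mono_ex1[OF finV])
      show "\<forall>i\<in>V. p i (y i) - p i 0 \<le> p i (x i) + u i (x i) * (y i - x i) - p i 0"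
      proof
        fix i assume iV: "i \<in> V"
        show "p i (y i) - p i 0 \<le> p i (x i) + u i (x i) * (y i - x i) - p i 0"
          using tle[OF iV Snn[OF xS, of i] Snn[OF yS, of i]] by linarith
      qed
      show "\<exists>i\<in>V. p i (y i) - p i 0 < p i (x i) + u i (x i) * (y i - x i) - p i 0"
      proof
        show "p k (y k) - p k 0 < p k (x k) + u k (x k) * (y k - x k) - p k 0"
          using tlt[OF kV Snn[OF xS, of k] Snn[OF yS, of k] k] by linarith
      qed (rule kV)
    qed
    also have "\<dots> = U x + (\<Sum>i\<in>V. u i (x i) * (y i - x i))"
    proof -
      have "(\<Sum>i\<in>V. p i (x i) + u i (x i) * (y i - x i) - p i 0)
          = (\<Sum>i\<in>V. (p i (x i) - p i 0) + u i (x i) * (y i - x i))"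
        by (rule sum.cong) auto
      also have "\<dots> = U x + (\<Sum>i\<in>V. u i (x i) * (y i - x i))"
        unfolding U_def by (rule sum.distrib)
      finally show ?thesis .
    qed
    finally show ?thesis using s0 by linarith
  qed
  have ne_kkt: "KKT x" if xne: "x \<in> nash_eq V E u \<rho>" for x
  proof -
    have xS: "x \<in> S" using xne by (simp add: nash_eq_def S_def)
    have nash: "u j (x j) \<le> u i (x i)" if "i \<in> V" "x i \<noteq> 0" "j \<in> V" "E i j" for i j
      using xne that by (auto simp: nash_eq_def support_on_def neighbours_def)
    have "u j (x j) \<le> u i (x i)" if iV: "i \<in> V" and xi: "x i \<noteq> 0" and jV: "j \<in> V" for i j
    proof (cases "i = j")
      case True then show ?thesis by simp
    next
      case False
      obtain ps where ps: "is_path V E ps" "hd ps = i" "last ps = j"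
        "quasi_concave_path (\<lambda>i. u i 0) ps"
        using qch iV jV False unfolding quasi_concave_hill_def by blast
      define L where "L = u i (x i)"
      show ?thesis
      proof (rule ccontr)
        assume "\<not> ?thesis"
        then have jL: "u j (x j) > L" by (simp add: L_def)
        have xipos: "0 < x i" using Snn[OF xS, of i] xi by simp
        have ai: "u i 0 > L" unfolding L_def using dec[OF iV _ xipos] by simp
        have aj: "u j 0 > L" using decle[OF jV, of 0 "x j"] Snn[OF xS, of j] jL by simp
        have ne: "ps \<noteq> []" and setV: "set ps \<subseteq> V"
          and adj: "\<And>k. Suc k < length ps \<Longrightarrow> E (ps ! k) (ps ! Suc k)"
          using ps(1) by (auto simp: is_path_def)
        have h0: "ps ! 0 = i" using ps(2) ne by (simp add: hd_conv_nth)
        have hl: "ps ! (length ps - 1) = j" using ps(3) ne by (simp add: last_conv_nth)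
        have inV: "ps ! m \<in> V" if "m < length ps" for m using setV that by auto
        have aL: "u (ps ! m) 0 > L" if "m < length ps" for m
        proof -
          have "0 \<le> m \<and> m \<le> length ps - 1 \<and> length ps - 1 < length ps" using that by auto
          then have "u (ps ! m) 0 \<ge> min (u (ps ! 0) 0) (u (ps ! (length ps - 1)) 0)"
            using ps(4) unfolding quasi_concave_path_def by blast
          then show ?thesis using ai aj h0 hl by simp
        qed
        have vL: "u (ps ! m) (x (ps ! m)) \<le> L" if "m < length ps" for m
          using that
        proof (induction m)
          case 0 then show ?case using h0 by (simp add: L_def)
        next
          case (Suc m)
          then have IH: "u (ps ! m) (x (ps ! m)) \<le> L" by simp
          have mV: "ps ! m \<in> V" using inV Suc.prems by simp
          have "x (ps ! m) \<noteq> 0" using IH aL[of m] Suc.prems by auto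
          then have "u (ps ! Suc m) (x (ps ! Suc m)) \<le> u (ps ! m) (x (ps ! m))"
            using nash[OF mV _ inV[OF Suc.prems] adj[OF Suc.prems]] by simp
          then show ?case using IH by simp
        qed
        have "u j (x j) \<le> L" using vL[of "length ps - 1"] ne hl by simp
        then show False using jL by simp
      qed
    qed
    then show ?thesis using xS by (auto simp: KKT_def)
  qed
  have kkt_ne: "x \<in> nash_eq V E u \<rho>" if "KKT x" for x
    using that unfolding KKT_def nash_eq_def S_def support_on_def neighbours_def by auto
  have split2: "(\<Sum>k\<in>V. F k) = F i + F j + (\<Sum>k\<in>V-{i,j}. F k)"
    if "i \<in> V" "j \<in> V" "i \<noteq> j" for F :: "'a \<Rightarrow> real" and i j
  proof -
    have "(\<Sum>k\<in>V. F k) = F i + (\<Sum>k\<in>V-{i}. F k)" using sum.remove[OF finV that(1)] .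
    also have "(\<Sum>k\<in>V-{i}. F k) = F j + (\<Sum>k\<in>V-{i}-{j}. F k)"
      using sum.remove[of "V-{i}" j F] finV that by auto
    also have "V-{i}-{j} = V-{i,j}" by auto
    finally show ?thesis by simp
  qed
  obtain v0 where v0: "v0 \<in> V" using neV by auto
  have Sne: "S \<noteq> {}"
  proof -
    have "(\<lambda>i. if i = v0 then \<rho> else 0) \<in> S"
      using v0 rho finV by (auto simp: S_def strategy_simplex_def)
    then show ?thesis by auto
  qed
  have pcont: "continuous_on {0..} (p i)" if "i \<in> V" for i
    by (rule DERIV_continuous_on) (use dp[OF that] in auto)
  have Ucont: "continuous_on S U"
    unfolding U_def
  proof (intro continuous_on_sum continuous_on_diff continuous_on_const)
    fix i assume iV: "i \<in> V"
    show "continuous_on S (\<lambda>x. p i (x i))"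
      by (rule continuous_on_compose2[OF pcont[OF iV] continuous_on_subset[OF continuous_on_product_coordinates]])
         (use Snn in auto)
  qed
  obtain x0 where x0S: "x0 \<in> S" and x0max: "\<forall>y\<in>S. U y \<le> U x0"
    using continuous_attains_sup[OF _ Sne Ucont] simplex_compact[OF finV rho]
    unfolding S_def by blast
  have kx0: "KKT x0"
    unfolding KKT_def
  proof (intro conjI ballI impI x0S)
    fix i j assume iV: "i \<in> V" and xi: "x0 i \<noteq> 0" and jV: "j \<in> V"
    show "u j (x0 j) \<le> u i (x0 i)"
    proof (rule ccontr)
      assume "\<not> ?thesis"
      then have gtj: "u j (x0 j) > u i (x0 i)" by simp
      then have ij: "i \<noteq> j" by auto
      define a where "a = x0 i"
      have apos: "0 < a" using Snn[OF x0S, of i] xi by (simp add: a_def)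
      have xj: "0 \<le> x0 j" using Snn[OF x0S] .
      define y where "y t = x0(i := a - t, j := x0 j + t)" for t
      define g where "g t = p i (a - t) + p j (x0 j + t)" for t
      have yi: "y t i = a - t" and yj: "y t j = x0 j + t" for t
        using ij by (auto simp: y_def)
      have yo: "y t k = x0 k" if "k \<noteq> i" "k \<noteq> j" for t k
        using that by (auto simp: y_def)
      have yS: "y t \<in> S" if "0 \<le> t" "t \<le> a" for t
      proof -
        have "(\<Sum>k\<in>V. y t k) = (\<Sum>k\<in>V. x0 k)"
          using split2[OF iV jV ij, of "y t"] split2[OF iV jV ij, of x0] yi yj yo
          by (simp add: a_def)
        moreover have "\<forall>k\<in>V. 0 \<le> y t k" using that Snn[OF x0S] yi yj yo xj
          by (metis add_nonneg_nonneg diff_ge_0_iff_ge)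
        moreover have "\<forall>k. k \<notin> V \<longrightarrow> y t k = 0" using Sout[OF x0S] yo iV jV by metis
        ultimately show ?thesis using Ssum[OF x0S] by (simp add: S_def strategy_simplex_def)
      qed
      have Uy: "U (y t) = U x0 - g 0 + g t" for t
      proof -
        have "U (y t) = (p i (y t i) - p i 0) + (p j (y t j) - p j 0) + (\<Sum>k\<in>V-{i,j}. p k (y t k) - p k 0)"
          unfolding U_def by (rule split2[OF iV jV ij])
        moreover have "U x0 = (p i (x0 i) - p i 0) + (p j (x0 j) - p j 0) + (\<Sum>k\<in>V-{i,j}. p k (x0 k) - p k 0)"
          unfolding U_def by (rule split2[OF iV jV ij])
        moreover have "(\<Sum>k\<in>V-{i,j}. p k (y t k) - p k 0) = (\<Sum>k\<in>V-{i,j}. p k (x0 k) - p k 0)"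
          by (rule sum.cong) (auto simp: yo)
        ultimately show ?thesis by (simp add: g_def yi yj a_def)
      qed
      have dj: "((\<lambda>t. p j (x0 j + t)) has_real_derivative u j (x0 j)) (at 0 within {0..a})"
      proof -
        have "(p j has_real_derivative u j (x0 j + 0)) (at (x0 j + 0) within ((\<lambda>t. x0 j + t) ` {0..a}))"
          by (rule DERIV_subset[OF dp[OF jV]]) (use xj in auto)
        moreover have "((\<lambda>t. x0 j + t) has_real_derivative 1) (at 0 within {0..a})"
          by (auto intro!: derivative_eq_intros)
        ultimately have "(p j \<circ> (\<lambda>t. x0 j + t) has_real_derivative u j (x0 j + 0) * 1) (at 0 within {0..a})"
          by (rule DERIV_image_chain)
        then show ?thesis by (simp add: o_def)
      qed
      have di: "((\<lambda>t. p i (a - t)) has_real_derivative u i a * -1) (at 0 within {0..a})"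
      proof -
        have "(p i has_real_derivative u i (a - 0)) (at (a - 0) within ((\<lambda>t. a - t) ` {0..a}))"
          by (rule DERIV_subset[OF dp[OF iV]]) (use apos in auto)
        moreover have "((\<lambda>t. a - t) has_real_derivative -1) (at 0 within {0..a})"
          by (auto intro!: derivative_eq_intros)
        ultimately have "(p i \<circ> (\<lambda>t. a - t) has_real_derivative u i (a - 0) * -1) (at 0 within {0..a})"
          by (rule DERIV_image_chain)
        then show ?thesis by (simp add: o_def)
      qed
      have dg: "(g has_real_derivative (u i a * -1 + u j (x0 j))) (at 0 within {0..a})"
        unfolding g_def[abs_def] using DERIV_add[OF di dj] by simp
      have "0 < u i a * -1 + u j (x0 j)" using gtj by (simp add: a_def)
      then obtain d where d: "d > 0" "\<forall>h>0. 0 + h \<in> {0..a} \<longrightarrow> h < d \<longrightarrow> g 0 < g (0 + h)"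
        using has_real_derivative_pos_inc_right[OF dg] by blast
      define h where "h = min (d/2) a"
      have h: "0 < h" "h < d" "h \<le> a" using d apos by (auto simp: h_def min_def)
      have "g 0 < g h" using d h by auto
      then have "U x0 < U (y h)" using Uy[of h] by simp
      moreover have "U (y h) \<le> U x0" using x0max yS[of h] h by auto
      ultimately show False by simp
    qed
  qed
  show ?thesis
  proof (intro exI conjI ballI impI)
    show "nash_eq V E u \<rho> = {x0}"
    proof (intro set_eqI iffI)
      fix z assume "z \<in> nash_eq V E u \<rho>"
      then have kz: "KKT z" by (rule ne_kkt)
      show "z \<in> {x0}"
      proof (rule ccontr)
        assume "z \<notin> {x0}"
        then have "z \<noteq> x0" by simp
        then have "U z < U x0" "U x0 < U z"
          using opt[OF kx0, of z] opt[OF kz, of x0] kz kx0 by (auto simp: KKT_def)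
        then show False by simp
      qed
    next
      fix z assume "z \<in> {x0}" then show "z \<in> nash_eq V E u \<rho>" using kkt_ne[OF kx0] by simp
    qed
    show "x0 \<in> strategy_simplex V \<rho>" using kx0 by (simp add: KKT_def S_def)
    fix y assume "y \<in> strategy_simplex V \<rho>" "y \<noteq> x0"
    then show "(\<Sum>i\<in>V. p i (y i) - p i 0) < (\<Sum>i\<in>V. p i (x0 i) - p i 0)"
      using opt[OF kx0, of y] by (simp add: S_def U_def)
  qed
qed

end
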